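(* Let $N\ge 2$ be an integer. There exist a nonempty open convex set $C\subset\mathbb{R}^{N-2}$ and a continuous injective map $\Phi\colon C\to\mathbb{R}^{(N-1)\times(N-1)}$ such that for every $w\in C$ the matrix $H=\Phi(w)$ is lower triangular and the following holds: for every $d\ge1$, every nonexpansive $\mathbb{T}\colon\mathbb{R}^d\to\mathbb{R}^d$, every $y_0\in\mathbb{R}^d$ and every $y_\star\in\mathrm{Fix}\,\mathbb{T}$, the iterates defined by \[ y_{k+1} = y_k - \sum_{j=0}^{k} h_{k+1,j+1}\,(y_j - \mathbb{T}y_j), \qquad k=0,1,\dots,N-2, \] where $h_{k,j}$ denotes the $(k,j)$ entry of $H$, satisfy \[ \|y_{N-1}-\mathbb{T}y_{N-1}\|^2 \le \frac{4\|y_0-y_\star\|^2}{N^2}. \]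
   Context: $\mathbb{T}$ is nonexpansive if it is $1$-Lipschitz; $\mathrm{Fix}\,\mathbb{T}=\{y: y=\mathbb{T}y\}$. Rows and columns of $(N-1)\times(N-1)$ matrices are indexed $1,\dots,N-1$. *)

theory Defs
  imports "HOL-Analysis.Analysis"
begin

text \<open>Since the dimensions N-2, N-1 and d vary inside the statement, R^m is modelled
  explicitly as the set of real sequences supported on the indices 0..<m, with the
  Euclidean distance; (N-1)x(N-1) matrices are functions nat => nat => real supported
  on {1..N-1} x {1..N-1} (rows/columns indexed 1..N-1), with the Frobenius distance.\<close>

definition rvec :: "nat \<Rightarrow> (nat \<Rightarrow> real) set" where
  "rvec m = {x. \<forall>i\<ge>m. x i = 0}"

definition edist :: "nat \<Rightarrow> (nat \<Rightarrow> real) \<Rightarrow> (nat \<Rightarrow> real) \<Rightarrow> real" where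
  "edist m x y = sqrt (\<Sum>i<m. (x i - y i)^2)"

definition enorm :: "nat \<Rightarrow> (nat \<Rightarrow> real) \<Rightarrow> real" where
  "enorm m x = sqrt (\<Sum>i<m. (x i)^2)"

definition open_R :: "nat \<Rightarrow> (nat \<Rightarrow> real) set \<Rightarrow> bool" where
  "open_R m C \<longleftrightarrow> C \<subseteq> rvec m \<and>
     (\<forall>x\<in>C. \<exists>e>0. \<forall>y\<in>rvec m. edist m y x < e \<longrightarrow> y \<in> C)"

definition convex_R :: "(nat \<Rightarrow> real) set \<Rightarrow> bool" where
  "convex_R C \<longleftrightarrow> (\<forall>x\<in>C. \<forall>y\<in>C. \<forall>u::real. 0 \<le> u \<and> u \<le> 1 \<longrightarrow>
     (\<lambda>i. (1 - u) * x i + u * y i) \<in> C)"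

definition rmat :: "nat \<Rightarrow> (nat \<Rightarrow> nat \<Rightarrow> real) set" where
  "rmat n = {H. \<forall>i j. i \<notin> {1..n} \<or> j \<notin> {1..n} \<longrightarrow> H i j = 0}"

definition mdist :: "nat \<Rightarrow> (nat \<Rightarrow> nat \<Rightarrow> real) \<Rightarrow> (nat \<Rightarrow> nat \<Rightarrow> real) \<Rightarrow> real" where
  "mdist n A B = sqrt (\<Sum>i=1..n. \<Sum>j=1..n. (A i j - B i j)^2)"

definition continuous_R :: "nat \<Rightarrow> nat \<Rightarrow> (nat \<Rightarrow> real) set \<Rightarrow>
    ((nat \<Rightarrow> real) \<Rightarrow> (nat \<Rightarrow> nat \<Rightarrow> real)) \<Rightarrow> bool" where
  "continuous_R m n C \<Phi> \<longleftrightarrow> (\<forall>x\<in>C. \<forall>e>0. \<exists>\<delta>>0. \<forall>y\<in>C.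
     edist m y x < \<delta> \<longrightarrow> mdist n (\<Phi> y) (\<Phi> x) < e)"

definition lower_triangular :: "nat \<Rightarrow> (nat \<Rightarrow> nat \<Rightarrow> real) \<Rightarrow> bool" where
  "lower_triangular n H \<longleftrightarrow> (\<forall>i\<in>{1..n}. \<forall>j\<in>{1..n}. i < j \<longrightarrow> H i j = 0)"

definition nonexpansive_R :: "nat \<Rightarrow> ((nat \<Rightarrow> real) \<Rightarrow> (nat \<Rightarrow> real)) \<Rightarrow> bool" where
  "nonexpansive_R d T \<longleftrightarrow> (\<forall>x\<in>rvec d. T x \<in> rvec d) \<and>
     (\<forall>x\<in>rvec d. \<forall>y\<in>rvec d. edist d (T x) (T y) \<le> edist d x y)"

end

theory Submission
  imports Defs
begin

definition tw :: "nat \<Rightarrow> (nat \<Rightarrow> real) \<Rightarrow> nat \<Rightarrow> real" where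
  "tw N w k = (if 1 \<le> k \<and> k \<le> N - 2 then w (k - 1) else 0)"

fun cc :: "(nat \<Rightarrow> real) \<Rightarrow> nat \<Rightarrow> nat \<Rightarrow> real" where
  "cc t 0 j = 0"
| "cc t (Suc 0) j = (if j = 0 then 1 / (2 * (1 - t 1)) else 0)"
| "cc t (Suc (Suc k)) j =
     ((real (k + 2) / real (k + 3)) * ((1 - t (Suc k)) * cc t (Suc k) j + t (Suc k) * cc t k j
        + (if j = Suc k then 1 - t (Suc k) else 0) + (if j = k then t (Suc k) else 0))
      - t (Suc (Suc k)) * cc t (Suc k) j) / (1 - t (Suc (Suc k)))"

lemma cc_zero: "k \<le> j \<Longrightarrow> cc t k j = 0"
  by (induction t k j rule: cc.induct) auto

lemma cc_diag:
  assumes "t 0 = 0"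
  shows "cc t (Suc k) k = (real (k + 1) / real (k + 2)) * (1 - t k) / (1 - t (Suc k))"
proof (cases k)
  case 0 then show ?thesis using assms by simp
next
  case (Suc k') then show ?thesis by (simp add: cc_zero)
qed

lemma cc_rec:
  assumes "t 0 = 0" "t (Suc k) \<noteq> 1"
  shows "cc t (Suc k) j * (1 - t (Suc k)) + t (Suc k) * cc t k j =
     (real (k + 1) / real (k + 2)) * ((1 - t k) * cc t k j + t k * cc t (k - 1) j
        + (if j = k then 1 - t k else 0) + (if j = k - 1 then t k else 0))"
proof (cases k)
  case 0 then show ?thesis using assms by auto
next
  case (Suc k')
  have ne: "1 - t (Suc (Suc k')) \<noteq> 0" using assms Suc by simp
  have "cc t (Suc (Suc k')) j * (1 - t (Suc (Suc k'))) =
     (real (k' + 2) / real (k' + 3)) * ((1 - t (Suc k')) * cc t (Suc k') j + t (Suc k') * cc t k' j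
        + (if j = Suc k' then 1 - t (Suc k') else 0) + (if j = k' then t (Suc k') else 0))
      - t (Suc (Suc k')) * cc t (Suc k') j"
    using ne by simp
  then show ?thesis using Suc by (simp add: algebra_simps)
qed

lemma step_scalar:
  fixes a b e :: real and k :: nat
  defines "r \<equiv> real (k + 1) / real (k + 2)"
  shows "real k * real (k + 1) / 2 * a^2 + real (k + 1) * (a * e)
       - (real (k + 1) * real (k + 2) / 2 * b^2 + real (k + 2) * (b * (r * (e - a))))
     = real (k + 1) * real (k + 2) / 2 * (2 * (b - a) * (r * (e - a) - e) - (b - a)^2)"
  unfolding r_def by (simp add: field_simps power2_eq_square)

lemma dec_scalar:
  fixes t1 t2 g0 g1 g2 y0 y1 y2 :: real
  shows "2 * (((1 - t2) * g2 + t2 * g1) - ((1 - t1) * g1 + t1 * g0))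
            * (((1 - t2) * y2 + t2 * y1) - ((1 - t1) * y1 + t1 * y0))
         - (((1 - t2) * g2 + t2 * g1) - ((1 - t1) * g1 + t1 * g0))^2
       = (1 - t1 - t2) * (1 - t2) * (2 * (g2 - g1) * (y2 - y1) - (g2 - g1)^2)
         + t1 * (1 - t2) * (2 * (g2 - g0) * (y2 - y0) - (g2 - g0)^2)
         - t1 * (1 - t1 - t2) * (2 * (g1 - g0) * (y1 - y0) - (g1 - g0)^2)"
  by (simp add: power2_eq_square algebra_simps)

lemma coef_scalar:
  fixes a b c :: real and k :: nat
  assumes "0 \<le> a" "a \<le> 1/10" "0 \<le> b" "b \<le> 1/10" "0 \<le> c" "c \<le> 1/10"
  shows "real (k + 2) * real (k + 3) / 2 * (b * (1 - b - c))
     \<le> real (k + 1) * real (k + 2) / 2 * ((1 - a - b) * (1 - b))"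
proof -
  have A: "(1 - a - b) * (1 - b) \<ge> 72/100"
  proof -
    have "(8/10::real) * (9/10) \<le> (1 - a - b) * (1 - b)"
      by (rule mult_mono) (use assms in auto)
    then show ?thesis by simp
  qed
  have B: "b * (1 - b - c) \<le> 1/10"
  proof -
    have "b * (1 - b - c) \<le> (1/10) * 1"
      by (rule mult_mono) (use assms in auto)
    then show ?thesis by simp
  qed
  have k0: "0 \<le> real (k + 2) * real (k + 3) / 2" by simp
  have "real (k + 2) * real (k + 3) / 2 * (b * (1 - b - c)) \<le> real (k + 2) * real (k + 3) / 2 * (1/10)"
    by (rule mult_left_mono[OF B k0])
  also have "\<dots> \<le> real (k + 1) * real (k + 2) / 2 * (72/100)"
    by (simp add: field_simps)
  also have "\<dots> \<le> real (k + 1) * real (k + 2) / 2 * ((1 - a - b) * (1 - b))"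
    by (rule mult_left_mono[OF A]) simp
  finally show ?thesis .
qed

lemma ne_ineq:
  assumes "nonexpansive_R d T" "u \<in> rvec d" "v \<in> rvec d"
  shows "0 \<le> (\<Sum>i<d. 2 * ((u i - T u i) - (v i - T v i)) * (u i - v i) - ((u i - T u i) - (v i - T v i))^2)"
proof -
  have "edist d (T u) (T v) \<le> edist d u v" using assms unfolding nonexpansive_R_def by blast
  then have "(\<Sum>i<d. (T u i - T v i)^2) \<le> (\<Sum>i<d. (u i - v i)^2)"
    unfolding edist_def by (simp add: sum_nonneg)
  then have "0 \<le> (\<Sum>i<d. (u i - v i)^2) - (\<Sum>i<d. (T u i - T v i)^2)" by simp
  also have "\<dots> = (\<Sum>i<d. 2 * ((u i - T u i) - (v i - T v i)) * (u i - v i) - ((u i - T u i) - (v i - T v i))^2)"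
    unfolding sum_subtractf[symmetric]
    by (rule sum.cong) (simp_all add: power2_eq_square algebra_simps)
  finally show ?thesis .
qed

lemma sum_ifmult:
  fixes f :: "nat \<Rightarrow> real"
  assumes "k \<in> A" "finite A"
  shows "(\<Sum>j\<in>A. (if j = k then a else 0) * f j) = a * f k"
proof -
  have "(\<Sum>j\<in>A. (if j = k then a else 0) * f j) = (\<Sum>j\<in>A. if j = k then a * f j else 0)"
    by (rule sum.cong) auto
  then show ?thesis using assms by simp
qed

lemma main_bound:
  fixes N d :: nat and t :: "nat \<Rightarrow> real" and T :: "(nat \<Rightarrow> real) \<Rightarrow> (nat \<Rightarrow> real)"
    and y :: "nat \<Rightarrow> nat \<Rightarrow> real" and ystar :: "nat \<Rightarrow> real"
  assumes N2: "N \<ge> 2" and t0: "t 0 = 0" and tN: "t (N - 1) = 0"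
    and tb: "\<And>k. 0 \<le> t k \<and> t k \<le> 1/10"
    and ne: "nonexpansive_R d T" and y0: "y 0 \<in> rvec d" and ys: "ystar \<in> rvec d"
    and fx: "T ystar = ystar"
    and rec: "\<forall>k\<le>N - 2. \<forall>i. y (Suc k) i =
               y k i - (\<Sum>j\<le>k. (cc t (k + 1) j - cc t k j) * (y j i - T (y j) i))"
  shows "(\<Sum>i<d. (y (N - 1) i - T (y (N - 1)) i)^2) \<le> 4 * (\<Sum>i<d. (y 0 i - ystar i)^2) / (real N)^2"
proof -
  define g where "g j i = y j i - T (y j) i" for j i
  have t1: "t k \<noteq> 1" for k using tb[of k] by auto
  have yr: "\<forall>j\<le>k. y j \<in> rvec d" if "k \<le> N - 1" for k
    using that
  proof (induction k)
    case 0 then show ?case using y0 by simp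
  next
    case (Suc k)
    then have IH: "\<forall>j\<le>k. y j \<in> rvec d" by simp
    have "y (Suc k) \<in> rvec d"
      unfolding rvec_def
    proof (intro CollectI allI impI)
      fix i assume "d \<le> i"
      have "y (Suc k) i = y k i - (\<Sum>j\<le>k. (cc t (k + 1) j - cc t k j) * (y j i - T (y j) i))"
        using rec Suc.prems by simp
      also have "\<dots> = 0"
      proof -
        have "\<forall>j\<le>k. y j i = 0 \<and> T (y j) i = 0"
          using IH \<open>d \<le> i\<close> ne unfolding rvec_def nonexpansive_R_def by auto
        then show ?thesis by simp
      qed
      finally show "y (Suc k) i = 0" .
    qed
    then show ?case using IH le_Suc_eq by auto
  qed
  have yrv: "y k \<in> rvec d" if "k \<le> N - 1" for k using yr[OF that] by simp
  define Q where "Q a b = (\<Sum>i<d. 2 * (g b i - g a i) * (y b i - y a i) - (g b i - g a i)^2)" for a b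
  have Qnn: "0 \<le> Q a b" if "a \<le> N - 1" "b \<le> N - 1" for a b
    using ne_ineq[OF ne yrv[OF that(2)] yrv[OF that(1)]] unfolding Q_def g_def by simp
  have Erep: "\<forall>i. y k i = y 0 i - (\<Sum>j<N. cc t k j * g j i)" if "k \<le> N - 1" for k
    using that
  proof (induction k)
    case 0 then show ?case by simp
  next
    case (Suc k)
    show ?case
    proof
      fix i
      have kN: "k \<le> N - 2" using Suc.prems by simp
      have "y (Suc k) i = y k i - (\<Sum>j\<le>k. (cc t (k + 1) j - cc t k j) * g j i)"
        using rec kN unfolding g_def by simp
      also have "(\<Sum>j\<le>k. (cc t (k + 1) j - cc t k j) * g j i) = (\<Sum>j<N. (cc t (k + 1) j - cc t k j) * g j i)"
        by (rule sum.mono_neutral_left) (use kN N2 in \<open>auto simp: cc_zero\<close>)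
      finally show "y (Suc k) i = y 0 i - (\<Sum>j<N. cc t (Suc k) j * g j i)"
        using Suc.IH Suc.prems by (simp add: sum_subtractf algebra_simps)
    qed
  qed
  define E where "E k i = (\<Sum>j<N. cc t k j * g j i)" for k i
  define r where "r k = real (k + 1) / real (k + 2)" for k
  have Erec: "(1 - t (Suc k)) * E (Suc k) i + t (Suc k) * E k i =
      r k * ((1 - t k) * E k i + t k * E (k - 1) i + (1 - t k) * g k i + t k * g (k - 1) i)"
    if kN: "k \<le> N - 2" for k i
  proof -
    have kl: "k < N" "k - 1 < N" using kN N2 by auto
    have s1: "(\<Sum>j<N. (if j = k then 1 - t k else 0) * g j i) = (1 - t k) * g k i"
      using kl by (simp add: sum_ifmult)
    have s2: "(\<Sum>j<N. (if j = k - 1 then t k else 0) * g j i) = t k * g (k - 1) i"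
      using kl by (simp add: sum_ifmult)
    have "(1 - t (Suc k)) * E (Suc k) i + t (Suc k) * E k i =
        (\<Sum>j<N. (cc t (Suc k) j * (1 - t (Suc k)) + t (Suc k) * cc t k j) * g j i)"
      unfolding E_def by (simp add: sum_distrib_left sum.distrib[symmetric] algebra_simps)
    also have "\<dots> = (\<Sum>j<N. r k * ((1 - t k) * cc t k j + t k * cc t (k - 1) j
        + (if j = k then 1 - t k else 0) + (if j = k - 1 then t k else 0)) * g j i)"
      by (rule sum.cong) (simp_all add: cc_rec[OF t0 t1[of "Suc k"]] r_def)
    also have "\<dots> = r k * ((1 - t k) * E k i + t k * E (k - 1) i
        + (\<Sum>j<N. (if j = k then 1 - t k else 0) * g j i) + (\<Sum>j<N. (if j = k - 1 then t k else 0) * g j i))"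
      unfolding E_def by (simp add: sum_distrib_left sum.distrib[symmetric] algebra_simps)
    finally show ?thesis using s1 s2 by simp
  qed
  define yh where "yh k i = (1 - t k) * y k i + t k * y (k - 1) i" for k i
  define gh where "gh k i = (1 - t k) * g k i + t k * g (k - 1) i" for k i
  have hatrec: "yh (Suc k) i = y 0 i + r k * (yh k i - y 0 i - gh k i)" if kN: "k \<le> N - 2" for k i
  proof -
    have a: "E (Suc k) i = y 0 i - y (Suc k) i" "E k i = y 0 i - y k i" "E (k - 1) i = y 0 i - y (k - 1) i"
      using Erep[of "Suc k"] Erep[of k] Erep[of "k - 1"] kN N2 unfolding E_def by auto
    show ?thesis
      using Erec[OF kN, of i] unfolding yh_def gh_def a by (simp add: algebra_simps)
  qed
  define lam where "lam k = real (k + 1) * real (k + 2) / 2" for k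
  define V where "V k = real k * real (k + 1) / 2 * (\<Sum>i<d. (gh k i)^2)
      + real (k + 1) * (\<Sum>i<d. gh k i * (yh k i - y 0 i))" for k
  define Qh where "Qh k = (\<Sum>i<d. 2 * (gh (Suc k) i - gh k i) * (yh (Suc k) i - yh k i) - (gh (Suc k) i - gh k i)^2)" for k
  have Vstep: "V k - V (Suc k) = lam k * Qh k" if kN: "k \<le> N - 2" for k
  proof -
    have "V k - V (Suc k) = (\<Sum>i<d. real k * real (k + 1) / 2 * (gh k i)^2 + real (k + 1) * (gh k i * (yh k i - y 0 i))
       - (real (k + 1) * real (k + 2) / 2 * (gh (Suc k) i)^2 + real (k + 2) * (gh (Suc k) i * (r k * (yh k i - y 0 i - gh k i)))))"
    proof -
      have A: "V k = (\<Sum>i<d. real k * real (k + 1) / 2 * (gh k i)^2 + real (k + 1) * (gh k i * (yh k i - y 0 i)))"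
        unfolding V_def sum.distrib sum_distrib_left by simp
      have B: "V (Suc k) = (\<Sum>i<d. real (k + 1) * real (k + 2) / 2 * (gh (Suc k) i)^2 + real (k + 2) * (gh (Suc k) i * (r k * (yh k i - y 0 i - gh k i))))"
        unfolding V_def sum.distrib sum_distrib_left using hatrec[OF kN] by (simp add: add.commute)
      show ?thesis unfolding A B sum_subtractf[symmetric] by simp
    qed
    also have "\<dots> = (\<Sum>i<d. lam k * (2 * (gh (Suc k) i - gh k i) * (r k * (yh k i - y 0 i - gh k i) - (yh k i - y 0 i)) - (gh (Suc k) i - gh k i)^2))"
    proof (rule sum.cong)
      fix i
      show "real k * real (k + 1) / 2 * (gh k i)^2 + real (k + 1) * (gh k i * (yh k i - y 0 i))
       - (real (k + 1) * real (k + 2) / 2 * (gh (Suc k) i)^2 + real (k + 2) * (gh (Suc k) i * (r k * (yh k i - y 0 i - gh k i))))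
         = lam k * (2 * (gh (Suc k) i - gh k i) * (r k * (yh k i - y 0 i - gh k i) - (yh k i - y 0 i)) - (gh (Suc k) i - gh k i)^2)"
        using step_scalar[where k=k and a="gh k i" and b="gh (Suc k) i" and e="yh k i - y 0 i"]
        unfolding r_def lam_def by (simp add: algebra_simps)
    qed simp
    also have "\<dots> = lam k * Qh k"
      unfolding Qh_def sum_distrib_left
    proof (rule sum.cong)
      fix i
      have "yh (Suc k) i - yh k i = r k * (yh k i - y 0 i - gh k i) - (yh k i - y 0 i)"
        using hatrec[OF kN, of i] by simp
      then show "lam k * (2 * (gh (Suc k) i - gh k i) * (r k * (yh k i - y 0 i - gh k i) - (yh k i - y 0 i)) - (gh (Suc k) i - gh k i)^2)
        = lam k * (2 * (gh (Suc k) i - gh k i) * (yh (Suc k) i - yh k i) - (gh (Suc k) i - gh k i)^2)"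
        by simp
    qed simp
    finally show ?thesis .
  qed
  define al where "al k = (1 - t k - t (Suc k)) * (1 - t (Suc k))" for k
  define be where "be k = t k * (1 - t (Suc k))" for k
  define ga where "ga k = t k * (1 - t k - t (Suc k))" for k
  have Qdec: "Qh k = al k * Q k (Suc k) + be k * Q (k - 1) (Suc k) - ga k * Q (k - 1) k" for k
  proof -
    have "Qh k = (\<Sum>i<d. al k * (2 * (g (Suc k) i - g k i) * (y (Suc k) i - y k i) - (g (Suc k) i - g k i)^2)
        + be k * (2 * (g (Suc k) i - g (k - 1) i) * (y (Suc k) i - y (k - 1) i) - (g (Suc k) i - g (k - 1) i)^2)
        - ga k * (2 * (g k i - g (k - 1) i) * (y k i - y (k - 1) i) - (g k i - g (k - 1) i)^2))"
      unfolding Qh_def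
    proof (rule sum.cong)
      fix i
      show "2 * (gh (Suc k) i - gh k i) * (yh (Suc k) i - yh k i) - (gh (Suc k) i - gh k i)^2 =
        al k * (2 * (g (Suc k) i - g k i) * (y (Suc k) i - y k i) - (g (Suc k) i - g k i)^2)
        + be k * (2 * (g (Suc k) i - g (k - 1) i) * (y (Suc k) i - y (k - 1) i) - (g (Suc k) i - g (k - 1) i)^2)
        - ga k * (2 * (g k i - g (k - 1) i) * (y k i - y (k - 1) i) - (g k i - g (k - 1) i)^2)"
        unfolding gh_def yh_def al_def be_def ga_def diff_Suc_1
        by (rule dec_scalar)
    qed simp
    then show ?thesis unfolding Q_def sum_distrib_left sum.distrib[symmetric] sum_subtractf[symmetric] .
  qed
  define M where "M = N - 2"
  have NM: "N - 1 = Suc M" using N2 M_def by simp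
  have Qh_split: "(\<Sum>k<N - 1. lam k * Qh k) =
      (\<Sum>k<M. (lam k * al k - lam (Suc k) * ga (Suc k)) * Q k (Suc k)) + lam M * al M * Q M (Suc M)
      + (\<Sum>k<Suc M. lam k * be k * Q (k - 1) (Suc k))"
  proof -
    have "(\<Sum>k<N - 1. lam k * Qh k) = (\<Sum>k<Suc M. lam k * al k * Q k (Suc k))
        + (\<Sum>k<Suc M. lam k * be k * Q (k - 1) (Suc k)) - (\<Sum>k<Suc M. lam k * ga k * Q (k - 1) k)"
      unfolding NM Qdec sum.distrib[symmetric] sum_subtractf[symmetric]
      by (rule sum.cong) (simp_all add: algebra_simps)
    also have "(\<Sum>k<Suc M. lam k * ga k * Q (k - 1) k) = (\<Sum>k<M. lam (Suc k) * ga (Suc k) * Q k (Suc k))"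
      unfolding sum.lessThan_Suc_shift using t0 by (simp add: ga_def)
    also have "(\<Sum>k<Suc M. lam k * al k * Q k (Suc k)) = (\<Sum>k<M. lam k * al k * Q k (Suc k)) + lam M * al M * Q M (Suc M)"
      by simp
    finally show ?thesis by (simp add: sum_subtractf left_diff_distrib)
  qed
  have tbk: "0 \<le> t k" "t k \<le> 1/10" for k using tb[of k] by auto
  have Spos: "0 \<le> (\<Sum>k<N - 1. lam k * Qh k)"
  proof -
    have c1: "0 \<le> (lam k * al k - lam (Suc k) * ga (Suc k)) * Q k (Suc k)" if "k < M" for k
    proof (rule mult_nonneg_nonneg)
      have "real (k + 2) * real (k + 3) / 2 * (t (Suc k) * (1 - t (Suc k) - t (Suc (Suc k))))
         \<le> real (k + 1) * real (k + 2) / 2 * ((1 - t k - t (Suc k)) * (1 - t (Suc k)))"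
        by (rule coef_scalar) (use tbk in auto)
      then show "0 \<le> lam k * al k - lam (Suc k) * ga (Suc k)"
        unfolding lam_def al_def ga_def by (simp add: add.commute)
      show "0 \<le> Q k (Suc k)" using that NM by (intro Qnn) auto
    qed
    have c2: "0 \<le> lam M * al M * Q M (Suc M)"
    proof (intro mult_nonneg_nonneg)
      show "0 \<le> lam M" unfolding lam_def by simp
      show "0 \<le> al M" unfolding al_def using tbk[of M] tbk[of "Suc M"] by (intro mult_nonneg_nonneg) auto
      show "0 \<le> Q M (Suc M)" using NM by (intro Qnn) auto
    qed
    have c3: "0 \<le> lam k * be k * Q (k - 1) (Suc k)" if "k < Suc M" for k
    proof (intro mult_nonneg_nonneg)
      show "0 \<le> lam k" unfolding lam_def by simp
      show "0 \<le> be k" unfolding be_def using tbk[of k] tbk[of "Suc k"] by (intro mult_nonneg_nonneg) auto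
      show "0 \<le> Q (k - 1) (Suc k)" using that NM by (intro Qnn) auto
    qed
    have s1: "0 \<le> (\<Sum>k<M. (lam k * al k - lam (Suc k) * ga (Suc k)) * Q k (Suc k))"
      by (rule sum_nonneg) (use c1 in auto)
    have s3: "0 \<le> (\<Sum>k<Suc M. lam k * be k * Q (k - 1) (Suc k))"
      by (rule sum_nonneg) (use c3 in auto)
    show ?thesis unfolding Qh_split using s1 s3 c2 by linarith
  qed
  have tele: "(\<Sum>k<N - 1. V k - V (Suc k)) = V 0 - V (N - 1)" by (rule sum_lessThan_telescope')
  have "(\<Sum>k<N - 1. V k - V (Suc k)) = (\<Sum>k<N - 1. lam k * Qh k)"
    by (rule sum.cong) (auto intro: Vstep)
  moreover have "V 0 = 0" unfolding V_def yh_def using t0 by simp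
  ultimately have Vle: "V (N - 1) \<le> 0" using tele Spos by simp
  define n where "n = real N"
  have npos: "n > 0" using N2 n_def by simp
  define G where "G = (\<Sum>i<d. (g (N - 1) i)^2)"
  define P where "P = (\<Sum>i<d. g (N - 1) i * (y (N - 1) i - y 0 i))"
  define Z where "Z = (\<Sum>i<d. g (N - 1) i * (y 0 i - ystar i))"
  define X where "X = (\<Sum>i<d. (y 0 i - ystar i)^2)"
  have gh1: "gh (N - 1) i = g (N - 1) i" "yh (N - 1) i = y (N - 1) i" for i
    unfolding gh_def yh_def using tN by simp_all
  have "V (N - 1) = (n - 1) * n / 2 * G + n * P"
    unfolding V_def gh1 G_def P_def n_def using N2 by (simp add: of_nat_diff)
  then have "(n - 1) * n / 2 * G + n * P \<le> 0" using Vle by simp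
  moreover have "(n - 1) * n / 2 * G + n * P = n * n * G / 2 - n * G / 2 + n * P" by (simp add: field_simps)
  ultimately have f1: "n * n * G / 2 - n * G / 2 + n * P \<le> 0" by linarith
  have Rr: "0 \<le> 2 * P + 2 * Z - G"
  proof -
    have "0 \<le> (\<Sum>i<d. 2 * ((y (N - 1) i - T (y (N - 1)) i) - (ystar i - T ystar i)) * (y (N - 1) i - ystar i)
        - ((y (N - 1) i - T (y (N - 1)) i) - (ystar i - T ystar i))^2)"
      by (rule ne_ineq[OF ne yrv ys]) simp
    also have "\<dots> = 2 * P + 2 * Z - G"
      unfolding P_def Z_def G_def fx g_def sum_distrib_left sum.distrib[symmetric] sum_subtractf[symmetric]
      by (rule sum.cong) (simp_all add: algebra_simps)
    finally show ?thesis .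
  qed
  have f2: "0 \<le> 2 * (n * P) + 2 * (n * Z) - n * G"
    using mult_nonneg_nonneg[OF less_imp_le[OF npos] Rr] by (simp add: algebra_simps)
  have f3: "0 \<le> n * n * G / 4 - n * Z + X"
  proof -
    have "0 \<le> (\<Sum>i<d. (n / 2 * g (N - 1) i - (y 0 i - ystar i))^2)" by (simp add: sum_nonneg)
    also have "\<dots> = n * n * G / 4 - n * Z + X"
      unfolding G_def Z_def X_def sum_distrib_left sum_divide_distrib sum.distrib[symmetric] sum_subtractf[symmetric]
      by (rule sum.cong) (simp_all add: power2_eq_square algebra_simps)
    finally show ?thesis .
  qed
  have "n * n * G \<le> 4 * X" using f1 f2 f3 by linarith
  then have "G \<le> 4 * X / n^2" using npos by (simp add: field_simps power2_eq_square)
  then show ?thesis unfolding G_def X_def g_def n_def .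
qed

definition Phi :: "nat \<Rightarrow> (nat \<Rightarrow> real) \<Rightarrow> nat \<Rightarrow> nat \<Rightarrow> real" where
  "Phi N w i j = (if 1 \<le> i \<and> i \<le> N - 1 \<and> 1 \<le> j \<and> j \<le> i
     then cc (tw N w) i (j - 1) - cc (tw N w) (i - 1) (j - 1) else 0)"

definition Cset :: "nat \<Rightarrow> (nat \<Rightarrow> real) set" where
  "Cset N = {w \<in> rvec (N - 2). \<forall>i<N - 2. 0 < w i \<and> w i < 1/10}"

lemma tw_props:
  assumes "w \<in> Cset N" "N \<ge> 2"
  shows "tw N w 0 = 0" "tw N w (N - 1) = 0" "0 \<le> tw N w k" "tw N w k \<le> 1/10" "tw N w k < 1/10"
proof -
  have w: "\<forall>i<N - 2. 0 < w i \<and> w i < 1/10" using assms unfolding Cset_def by auto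
  show "tw N w 0 = 0" "tw N w (N - 1) = 0" unfolding tw_def using assms(2) by auto
  show "0 \<le> tw N w k" "tw N w k < 1/10" unfolding tw_def using w by (auto simp: less_imp_le)
  then show "tw N w k \<le> 1/10" by simp
qed

lemma coord_le_edist:
  assumes "i < m"
  shows "\<bar>y i - x i\<bar> \<le> edist m y x"
proof -
  have "(y i - x i)^2 \<le> (\<Sum>l<m. (y l - x l)^2)"
    using assms by (intro member_le_sum) auto
  then have "sqrt ((y i - x i)^2) \<le> sqrt (\<Sum>l<m. (y l - x l)^2)" by (rule real_sqrt_le_mono)
  then show ?thesis unfolding edist_def by simp
qed

lemma Phi_diag:
  assumes "w \<in> Cset N" "N \<ge> 2" "Suc k \<le> N - 1"
  shows "Phi N w (Suc k) (Suc k) = (real (k + 1) / real (k + 2)) * (1 - tw N w k) / (1 - tw N w (Suc k))"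
  using assms by (simp add: Phi_def cc_zero cc_diag tw_props)

lemma Phi_inj:
  assumes N2: "N \<ge> 2" shows "inj_on (Phi N) (Cset N)"
proof (rule inj_onI)
  fix w w' assume w: "w \<in> Cset N" and w': "w' \<in> Cset N" and eq: "Phi N w = Phi N w'"
  have teq: "k \<le> N - 1 \<Longrightarrow> tw N w k = tw N w' k" for k
  proof (induction k)
    case 0 then show ?case using tw_props[OF w N2] tw_props[OF w' N2] by simp
  next
    case (Suc k)
    have a: "Phi N w (Suc k) (Suc k) = Phi N w' (Suc k) (Suc k)" using eq by simp
    have ne1: "1 - tw N w k \<noteq> 0" "1 - tw N w (Suc k) \<noteq> 0" "1 - tw N w' (Suc k) \<noteq> 0"
      using tw_props(5)[OF w N2, of k] tw_props(5)[OF w N2, of "Suc k"] tw_props(5)[OF w' N2, of "Suc k"] by auto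
    have "(real (k + 1) / real (k + 2)) * (1 - tw N w k) / (1 - tw N w (Suc k))
        = (real (k + 1) / real (k + 2)) * (1 - tw N w k) / (1 - tw N w' (Suc k))"
      using a Phi_diag[OF w N2 Suc.prems] Phi_diag[OF w' N2 Suc.prems] Suc by simp
    moreover have "(real (k + 1) / real (k + 2)) * (1 - tw N w k) \<noteq> 0" using ne1 by simp
    ultimately have "1 - tw N w (Suc k) = 1 - tw N w' (Suc k)"
      unfolding times_divide_eq_right[symmetric] divide_cancel_left by simp
    then show ?case by simp
  qed
  show "w = w'"
  proof
    fix i
    show "w i = w' i"
    proof (cases "i < N - 2")
      case True
      then have "tw N w (Suc i) = tw N w' (Suc i)" using teq[of "Suc i"] by simp
      then show ?thesis using True unfolding tw_def by simp
    next
      case False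
      then show ?thesis using w w' unfolding Cset_def rvec_def by auto
    qed
  qed
qed

lemma tendsto_if_const:
  fixes f :: "'a \<Rightarrow> real"
  shows "(f \<longlongrightarrow> a) F \<Longrightarrow> ((\<lambda>y. if c then f y else 0) \<longlongrightarrow> (if c then a else 0)) F"
  by (cases c) auto

lemma Phi_cont:
  assumes N2: "N \<ge> 2" and x: "x \<in> Cset N"
  shows "\<forall>e>0. \<exists>\<delta>>0. \<forall>y\<in>Cset N. edist (N - 2) y x < \<delta> \<longrightarrow> mdist (N - 1) (Phi N y) (Phi N x) < e"
proof -
  define F where "F = (INF \<delta>\<in>{0<..}. principal {y \<in> Cset N. edist (N - 2) y x < (\<delta>::real)})"
  have evF: "eventually P F \<longleftrightarrow> (\<exists>\<delta>>0. \<forall>y\<in>Cset N. edist (N - 2) y x < \<delta> \<longrightarrow> P y)" for P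
  proof -
    have "eventually P F \<longleftrightarrow> (\<exists>b\<in>{0<..}. eventually P (principal {y \<in> Cset N. edist (N - 2) y x < (b::real)}))"
      unfolding F_def
    proof (rule eventually_INF_base)
      show "{0<..} \<noteq> ({}::real set)" by auto
      fix a b :: real assume "a \<in> {0<..}" "b \<in> {0<..}"
      then show "\<exists>c\<in>{0<..}. principal {y \<in> Cset N. edist (N - 2) y x < c}
          \<le> inf (principal {y \<in> Cset N. edist (N - 2) y x < a}) (principal {y \<in> Cset N. edist (N - 2) y x < b})"
        by (intro bexI[of _ "min a b"]) auto
    qed
    then show ?thesis by (auto simp: eventually_principal)
  qed
  have tw_t: "((\<lambda>y. tw N y k) \<longlongrightarrow> tw N x k) F" for k
  proof (cases "1 \<le> k \<and> k \<le> N - 2")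
    case True
    then have km: "k - Suc 0 < N - 2" by auto
    show ?thesis unfolding tw_def using True
    proof (simp, intro tendstoI)
      fix e :: real assume "0 < e"
      then show "eventually (\<lambda>y. dist (y (k - Suc 0)) (x (k - Suc 0)) < e) F"
        unfolding evF dist_real_def
        using coord_le_edist[OF km] by (intro exI[of _ e]) (fastforce intro: le_less_trans)
    qed
  next
    case False
    then have "(\<lambda>y. tw N y k) = (\<lambda>y. 0)" "tw N x k = 0" unfolding tw_def by auto
    then show ?thesis by simp
  qed
  have tne: "1 - tw N x k \<noteq> 0" "tw N x k \<noteq> 1" for k using tw_props(5)[OF x N2, of k] by simp_all
  have cc_t: "((\<lambda>y. cc (tw N y) k j) \<longlongrightarrow> cc (tw N x) k j) F \<and>
              ((\<lambda>y. cc (tw N y) (Suc k) j) \<longlongrightarrow> cc (tw N x) (Suc k) j) F" for k j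
  proof (induction k arbitrary: j)
    case 0
    show ?case
      by (auto intro!: tendsto_intros tw_t simp: tne)
  next
    case (Suc k)
    show ?case
    proof
      show "((\<lambda>y. cc (tw N y) (Suc k) j) \<longlongrightarrow> cc (tw N x) (Suc k) j) F" using Suc.IH by blast
      have IH1: "((\<lambda>y. cc (tw N y) (Suc k) j) \<longlongrightarrow> cc (tw N x) (Suc k) j) F"
        and IH0: "((\<lambda>y. cc (tw N y) k j) \<longlongrightarrow> cc (tw N x) k j) F" using Suc.IH by blast+
      show "((\<lambda>y. cc (tw N y) (Suc (Suc k)) j) \<longlongrightarrow> cc (tw N x) (Suc (Suc k)) j) F"
        unfolding cc.simps
        by (intro tendsto_intros tendsto_if_const IH1 IH0 tw_t) (simp add: tne)
    qed
  qed
  have Phi_t: "((\<lambda>y. Phi N y i j) \<longlongrightarrow> Phi N x i j) F" for i j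
    unfolding Phi_def using cc_t by (auto intro!: tendsto_intros)
  have "((\<lambda>y. \<Sum>i=1..N - 1. \<Sum>j=1..N - 1. (Phi N y i j - Phi N x i j)^2) \<longlongrightarrow>
        (\<Sum>i=1..N - 1. \<Sum>j=1..N - 1. (Phi N x i j - Phi N x i j)^2)) F"
    by (intro tendsto_intros Phi_t)
  then have "((\<lambda>y. mdist (N - 1) (Phi N y) (Phi N x)) \<longlongrightarrow> sqrt 0) F"
    unfolding mdist_def by (intro tendsto_real_sqrt) simp
  then have md: "((\<lambda>y. mdist (N - 1) (Phi N y) (Phi N x)) \<longlongrightarrow> 0) F" by simp
  show ?thesis
  proof (intro allI impI)
    fix e :: real assume "e > 0"
    then have "eventually (\<lambda>y. mdist (N - 1) (Phi N y) (Phi N x) < e) F"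
      using order_tendstoD(2)[OF md] by blast
    then show "\<exists>\<delta>>0. \<forall>y\<in>Cset N. edist (N - 2) y x < \<delta> \<longrightarrow> mdist (N - 1) (Phi N y) (Phi N x) < e"
      unfolding evF .
  qed
qed

lemma Cset_open: "open_R (N - 2) (Cset N)"
  unfolding open_R_def
proof (intro conjI ballI)
  show "Cset N \<subseteq> rvec (N - 2)" unfolding Cset_def by auto
  fix x assume x: "x \<in> Cset N"
  define m where "m = N - 2"
  define S where "S = insert (1::real) ((\<lambda>i. x i) ` {..<m} \<union> (\<lambda>i. 1/10 - x i) ` {..<m})"
  have fS: "finite S" "S \<noteq> {}" unfolding S_def by auto
  have Spos: "\<forall>s\<in>S. 0 < s" using x unfolding S_def Cset_def m_def by auto
  define e where "e = Min S"
  have epos: "0 < e" unfolding e_def using fS Spos by (simp add: Min_gr_iff)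
  have ex: "e \<le> x i" "e \<le> 1/10 - x i" if "i < m" for i
    unfolding e_def using fS that unfolding S_def by (auto intro: Min_le)
  show "\<exists>e>0. \<forall>y\<in>rvec (N - 2). edist (N - 2) y x < e \<longrightarrow> y \<in> Cset N"
  proof (intro exI[of _ e] conjI ballI impI epos)
    fix y assume y: "y \<in> rvec (N - 2)" and d: "edist (N - 2) y x < e"
    have "0 < y i \<and> y i < 1/10" if "i < N - 2" for i
    proof -
      have "\<bar>y i - x i\<bar> < e" using coord_le_edist[OF that, of y x] d by simp
      then show ?thesis using ex[of i] that unfolding m_def by auto
    qed
    then show "y \<in> Cset N" using y unfolding Cset_def by auto
  qed
qed

lemma Cset_convex: "convex_R (Cset N)"
  unfolding convex_R_def
proof (intro ballI allI impI)
  fix x y :: "nat \<Rightarrow> real" and u :: real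
  assume x: "x \<in> Cset N" and y: "y \<in> Cset N" and u: "0 \<le> u \<and> u \<le> 1"
  have "0 < (1 - u) * x i + u * y i \<and> (1 - u) * x i + u * y i < 1/10" if "i < N - 2" for i
  proof -
    have b: "0 < x i" "x i < 1/10" "0 < y i" "y i < 1/10" using x y that unfolding Cset_def by auto
    show ?thesis
    proof (cases "u = 0")
      case True then show ?thesis using b by simp
    next
      case False
      then have up: "0 < u" using u by simp
      have "0 \<le> (1 - u) * x i" using u b by simp
      moreover have "0 < u * y i" using up b by simp
      moreover have "(1 - u) * x i \<le> (1 - u) * (1/10)" using u b by (intro mult_left_mono) auto
      moreover have "u * y i < u * (1/10)" using up b by simp
      ultimately show ?thesis by (simp add: algebra_simps)
    qed
  qed
  moreover have "(1 - u) * x i + u * y i = 0" if "N - 2 \<le> i" for i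
    using x y that unfolding Cset_def rvec_def by auto
  ultimately show "(\<lambda>i. (1 - u) * x i + u * y i) \<in> Cset N" unfolding Cset_def rvec_def by auto
qed

lemma Cset_ne: "Cset N \<noteq> {}"
proof -
  have "(\<lambda>i. if i < N - 2 then 1/20 else 0) \<in> Cset N" unfolding Cset_def rvec_def by auto
  then show ?thesis by blast
qed

theorem theorem4p1:
  fixes N :: nat
  assumes "N \<ge> 2"
  shows "\<exists>C \<Phi>. C \<noteq> {} \<and> open_R (N - 2) C \<and> convex_R C \<and>
     continuous_R (N - 2) (N - 1) C \<Phi> \<and> inj_on \<Phi> C \<and> \<Phi> ` C \<subseteq> rmat (N - 1) \<and>
     (\<forall>w\<in>C. lower_triangular (N - 1) (\<Phi> w) \<and>
        (\<forall>d::nat. \<forall>T y ystar. d \<ge> 1 \<longrightarrow> nonexpansive_R d T \<longrightarrow>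
           y 0 \<in> rvec d \<longrightarrow> ystar \<in> rvec d \<longrightarrow> T ystar = ystar \<longrightarrow>
           (\<forall>k\<le>N - 2. \<forall>i. y (Suc k) i =
               y k i - (\<Sum>j\<le>k. \<Phi> w (k + 1) (j + 1) * (y j i - T (y j) i))) \<longrightarrow>
           (enorm d (\<lambda>i. y (N - 1) i - T (y (N - 1)) i))^2
             \<le> 4 * (edist d (y 0) ystar)^2 / (real N)^2))"
proof (intro exI[of _ "Cset N"] exI[of _ "Phi N"] conjI ballI)
  show "Cset N \<noteq> {}" by (rule Cset_ne)
  show "open_R (N - 2) (Cset N)" by (rule Cset_open)
  show "convex_R (Cset N)" by (rule Cset_convex)
  show "continuous_R (N - 2) (N - 1) (Cset N) (Phi N)"
    unfolding continuous_R_def using Phi_cont[OF assms] by blast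
  show "inj_on (Phi N) (Cset N)" by (rule Phi_inj[OF assms])
  show "Phi N ` Cset N \<subseteq> rmat (N - 1)" unfolding rmat_def Phi_def by auto
  fix w assume w: "w \<in> Cset N"
  show "lower_triangular (N - 1) (Phi N w)" unfolding lower_triangular_def Phi_def by auto
  show "\<forall>d::nat. \<forall>T y ystar. d \<ge> 1 \<longrightarrow> nonexpansive_R d T \<longrightarrow>
           y 0 \<in> rvec d \<longrightarrow> ystar \<in> rvec d \<longrightarrow> T ystar = ystar \<longrightarrow>
           (\<forall>k\<le>N - 2. \<forall>i. y (Suc k) i =
               y k i - (\<Sum>j\<le>k. Phi N w (k + 1) (j + 1) * (y j i - T (y j) i))) \<longrightarrow>
           (enorm d (\<lambda>i. y (N - 1) i - T (y (N - 1)) i))^2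
             \<le> 4 * (edist d (y 0) ystar)^2 / (real N)^2"
  proof (intro allI impI)
    fix d :: nat and T y ystar
    assume ne: "nonexpansive_R d T" and y0: "y 0 \<in> rvec d" and ys: "ystar \<in> rvec d"
      and fx: "T ystar = ystar"
      and rec: "\<forall>k\<le>N - 2. \<forall>i. y (Suc k) i =
               y k i - (\<Sum>j\<le>k. Phi N w (k + 1) (j + 1) * (y j i - T (y j) i))"
    have rec': "\<forall>k\<le>N - 2. \<forall>i. y (Suc k) i =
               y k i - (\<Sum>j\<le>k. (cc (tw N w) (k + 1) j - cc (tw N w) k j) * (y j i - T (y j) i))"
    proof (intro allI impI)
      fix k i assume k: "k \<le> N - 2"
      have "(\<Sum>j\<le>k. Phi N w (k + 1) (j + 1) * (y j i - T (y j) i))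
          = (\<Sum>j\<le>k. (cc (tw N w) (k + 1) j - cc (tw N w) k j) * (y j i - T (y j) i))"
        by (rule sum.cong) (use k assms in \<open>auto simp: Phi_def\<close>)
      then show "y (Suc k) i = y k i - (\<Sum>j\<le>k. (cc (tw N w) (k + 1) j - cc (tw N w) k j) * (y j i - T (y j) i))"
        using rec k by simp
    qed
    have mb: "(\<Sum>i<d. (y (N - 1) i - T (y (N - 1)) i)^2) \<le> 4 * (\<Sum>i<d. (y 0 i - ystar i)^2) / (real N)^2"
      by (rule main_bound[OF assms tw_props(1,2)[OF w assms] _ ne y0 ys fx rec'])
         (use tw_props(3,4)[OF w assms] in auto)
    show "(enorm d (\<lambda>i. y (N - 1) i - T (y (N - 1)) i))^2 \<le> 4 * (edist d (y 0) ystar)^2 / (real N)^2"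
      unfolding enorm_def edist_def using mb by (simp add: sum_nonneg)
  qed
qed

end
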